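(* Let $g>0$, $p_0<p_1<0$, $[\![\rho]\!]<0$, $\Gamma_{\mathrm{rel}}>0$ and $\lambda>0$. For each integer $n\ge1$, there exists a nontrivial solution $M$ to problem $(P_n)$ if and only if $\lambda=\lambda_n^*$, where $\lambda_n^*$ satisfies $$\frac{g[\![\rho]\!]}{n}=\Gamma_{\mathrm{rel}}^2\coth\Big(\frac{np_1}{\Gamma_{\mathrm{rel}}}\Big)-(\lambda_n^* )^2\coth\Big(\frac{n(p_1-p_0)}{\lambda_n^*}\Big).$$ Such a $\lambda_n^*>0$ exists if and only if $$\frac{g[\![\rho]\!]}{n}-\Gamma_{\mathrm{rel}}^2\coth\Big(\frac{np_1}{\Gamma_{\mathrm{rel}}}\Big)<0,$$ and if it exists it is unique. In that case the space of solutions of $(P_n)$ with $\lambda=\lambda_n^*$ is one-dimensional and spanned by $$M_n^*(p)=\begin{cases}\sinh\big(\frac{np}{\Gamma_{\mathrm{rel}}}\big), & p_1<p<0,\\ \mu\sinh\big(\frac{n(p-p_0)}{\lambda_n^*}\big), & p_0<p<p_1,\end{cases}\qquad \mu=\frac{\sinh\big(\frac{np_1}{\Gamma_{\mathrm{rel}}}\big)}{\sinh\big(\frac{n(p_1-p_0)}{\lambda_n^*}\big)} .$$ Finally, there are nontrivial solutions to $(P_0)$ if and only if $\lambda=\lambda_0$, where $\lambda_0^3=-g[\![\rho]\!](p_1-p_0)$.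
   Context: Let $a_\lambda(p)=\Gamma_{\mathrm{rel}}$ for $p_1<p<0$ and $a_\lambda(p)=\lambda$ for $p_0<p<p_1$. For $f$ defined on both sides of $p_1$, $[\![f]\!]=f(p_1^+)-f(p_1^-)$. Problem $(P_n)$, $n\ge1$: find $M\in C([p_0,0])$, $C^2$ on $[p_0,p_1]$ and on $[p_1,0]$, with $a_\lambda^2M_{pp}=n^2M$ on $(p_0,p_1)\cup(p_1,0)$, $[\![a_\lambda^3M_p]\!]=g[\![\rho]\!]M(p_1)$, $M(p_0)=0$, $M(0)=0$. Problem $(P_0)$: same regularity, with $a_\lambda^2M_{pp}=0$ on $(p_0,p_1)\cup(p_1,0)$, $[\![a_\lambda^3M_p]\!]=g[\![\rho]\!]M(p_1)$, $M(p_0)=0$, $M(0)=M(p_1)$. *)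

theory Defs
  imports "HOL-Analysis.Analysis"
begin

definition coth :: "real \<Rightarrow> real" where
  "coth x = cosh x / sinh x"

definition a_lam :: "real \<Rightarrow> real \<Rightarrow> real \<Rightarrow> real \<Rightarrow> real" where
  "a_lam Gam lam p1 p = (if p1 < p then Gam else lam)"

definition C2_on :: "real \<Rightarrow> real \<Rightarrow> (real \<Rightarrow> real) \<Rightarrow> (real \<Rightarrow> real) \<Rightarrow> (real \<Rightarrow> real) \<Rightarrow> bool" where
  "C2_on a b M D1 D2 \<longleftrightarrow>
     (\<forall>x\<in>{a..b}. (M has_real_derivative D1 x) (at x within {a..b}) \<and>
                  (D1 has_real_derivative D2 x) (at x within {a..b})) \<and>
     continuous_on {a..b} D2"

text \<open>Problem (P_n). L1,L2: derivatives of the piece on [p0,p1]; R1,R2: on [p1,0].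
  The jump [[a^3 M_p]] = a(p1+)^3 M_p(p1+) - a(p1-)^3 M_p(p1-).\<close>
definition solP :: "real \<Rightarrow> real \<Rightarrow> real \<Rightarrow> real \<Rightarrow> real \<Rightarrow> real \<Rightarrow> nat \<Rightarrow> (real \<Rightarrow> real) \<Rightarrow> bool" where
  "solP g rj Gam lam p0 p1 n M \<longleftrightarrow>
     continuous_on {p0..0} M \<and>
     (\<exists>L1 L2 R1 R2. C2_on p0 p1 M L1 L2 \<and> C2_on p1 0 M R1 R2 \<and>
        (\<forall>p\<in>{p0<..<p1}. (a_lam Gam lam p1 p)^2 * L2 p = (real n)^2 * M p) \<and>
        (\<forall>p\<in>{p1<..<0}. (a_lam Gam lam p1 p)^2 * R2 p = (real n)^2 * M p) \<and>
        Gam^3 * R1 p1 - lam^3 * L1 p1 = g * rj * M p1) \<and>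
     M p0 = 0 \<and> M 0 = 0"

definition solP0 :: "real \<Rightarrow> real \<Rightarrow> real \<Rightarrow> real \<Rightarrow> real \<Rightarrow> real \<Rightarrow> (real \<Rightarrow> real) \<Rightarrow> bool" where
  "solP0 g rj Gam lam p0 p1 M \<longleftrightarrow>
     continuous_on {p0..0} M \<and>
     (\<exists>L1 L2 R1 R2. C2_on p0 p1 M L1 L2 \<and> C2_on p1 0 M R1 R2 \<and>
        (\<forall>p\<in>{p0<..<p1}. (a_lam Gam lam p1 p)^2 * L2 p = 0) \<and>
        (\<forall>p\<in>{p1<..<0}. (a_lam Gam lam p1 p)^2 * R2 p = 0) \<and>
        Gam^3 * R1 p1 - lam^3 * L1 p1 = g * rj * M p1) \<and>
     M p0 = 0 \<and> M 0 = M p1"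

definition disp :: "real \<Rightarrow> real \<Rightarrow> real \<Rightarrow> real \<Rightarrow> real \<Rightarrow> nat \<Rightarrow> real \<Rightarrow> bool" where
  "disp g rj Gam p0 p1 n ls \<longleftrightarrow>
     g * rj / real n = Gam^2 * coth (real n * p1 / Gam) - ls^2 * coth (real n * (p1 - p0) / ls)"

text \<open>The eigenfunction M_n^* (at p1 both branches agree by the choice of mu).\<close>
definition Mstar :: "real \<Rightarrow> real \<Rightarrow> real \<Rightarrow> nat \<Rightarrow> real \<Rightarrow> real \<Rightarrow> real" where
  "Mstar Gam p0 p1 n ls p =
     (let mu = sinh (real n * p1 / Gam) / sinh (real n * (p1 - p0) / ls) in
      if p1 \<le> p then sinh (real n * p / Gam) else mu * sinh (real n * (p - p0) / ls))"

end

theory Submission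
  imports Defs
begin

lemma sinh_exp_real: "sinh (x::real) = (exp x - exp (-x)) / 2"
  by (simp add: sinh_def)
lemma cosh_exp_real: "cosh (x::real) = (exp x + exp (-x)) / 2"
  by (simp add: cosh_def)

lemma C2_facts:
  assumes "a < b" "C2_on a b M D1 D2"
  shows "\<forall>x\<in>{a..b}. (M has_real_derivative D1 x) (at x within {a..b})"
    "\<forall>x\<in>{a..b}. (D1 has_real_derivative D2 x) (at x within {a..b})"
    "continuous_on {a..b} D2" "continuous_on {a..b} M" "continuous_on {a..b} D1"
proof -
  show d1: "\<forall>x\<in>{a..b}. (M has_real_derivative D1 x) (at x within {a..b})"
   and d2: "\<forall>x\<in>{a..b}. (D1 has_real_derivative D2 x) (at x within {a..b})"
   and "continuous_on {a..b} D2" using assms(2) unfolding C2_on_def by auto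
  show "continuous_on {a..b} M" unfolding continuous_on_eq_continuous_within
    using d1 DERIV_continuous by blast
  show "continuous_on {a..b} D1" unfolding continuous_on_eq_continuous_within
    using d2 DERIV_continuous by blast
qed

lemma eq_closed:
  fixes f g :: "real \<Rightarrow> real"
  assumes "a < b" "continuous_on {a..b} f" "continuous_on {a..b} g"
    "\<forall>x\<in>{a<..<b}. f x = g x" "x \<in> {a..b}"
  shows "f x = g x"
proof -
  have "continuous_on (closure {a<..<b}) (\<lambda>x. f x - g x)"
    using assms by (auto intro!: continuous_intros)
  moreover have "x \<in> closure {a<..<b}" using assms by simp
  ultimately have "f x - g x = 0"
    using continuous_constant_on_closure[of "{a<..<b}" "\<lambda>x. f x - g x" 0 x] assms by auto
  then show ?thesis by simp
qed

lemma ode_exp: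
  fixes M D1 D2 :: "real \<Rightarrow> real" and k a b x0 :: real
  assumes ab: "a < b" and C: "C2_on a b M D1 D2" and ode: "\<forall>x\<in>{a<..<b}. D2 x = k^2 * M x"
    and x0: "x0 \<in> {a..b}" "M x0 = 0"
  shows "\<forall>x\<in>{a..b}. k * M x = D1 x0 * sinh (k*(x-x0)) \<and> D1 x = D1 x0 * cosh (k*(x-x0))"
proof -
  note F = C2_facts[OF ab C]
  have cM: "continuous_on {a..b} (\<lambda>x. k^2 * M x)" using F(4) by (auto intro!: continuous_intros)
  have ode2: "\<forall>x\<in>{a..b}. D2 x = k^2 * M x"
    using eq_closed[OF ab F(3) cM] ode by blast
  have e1: "((\<lambda>x. (D1 x - k*M x)*exp(k*x)) has_real_derivative 0) (at x within {a..b})"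
    if "x \<in> {a..b}" for x
  proof -
    have "((\<lambda>x. (D1 x - k*M x)*exp(k*x)) has_real_derivative
        ((D2 x - k * D1 x) * exp(k*x) + (D1 x - k*M x)*(exp(k*x)*k))) (at x within {a..b})"
    proof -
      have ex: "((\<lambda>x. exp(k*x)) has_real_derivative exp(k*x)*k) (at x within {a..b})"
        by (auto intro!: derivative_eq_intros)
      show ?thesis using DERIV_mult[OF DERIV_diff[OF bspec[OF F(2) that] DERIV_cmult[OF bspec[OF F(1) that], of k]] ex] by (simp add: ac_simps)
    qed
    moreover have "(D2 x - k * D1 x) * exp(k*x) + (D1 x - k*M x)*(exp(k*x)*k) = 0"
      using ode2 that by (simp add: algebra_simps power2_eq_square)
    ultimately show ?thesis by simp
  qed
  have e2: "((\<lambda>x. (D1 x + k*M x)*exp(-(k*x))) has_real_derivative 0) (at x within {a..b})"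
    if "x \<in> {a..b}" for x
  proof -
    have "((\<lambda>x. (D1 x + k*M x)*exp(-(k*x))) has_real_derivative
        ((D2 x + k * D1 x) * exp(-(k*x)) + (D1 x + k*M x)*(exp(-(k*x))*(-k)))) (at x within {a..b})"
    proof -
      have ex: "((\<lambda>x. exp(-(k*x))) has_real_derivative exp(-(k*x))*(-k)) (at x within {a..b})"
        by (auto intro!: derivative_eq_intros)
      show ?thesis using DERIV_mult[OF DERIV_add[OF bspec[OF F(2) that] DERIV_cmult[OF bspec[OF F(1) that], of k]] ex] by (simp add: ac_simps)
    qed
    moreover have "(D2 x + k * D1 x) * exp(-(k*x)) + (D1 x + k*M x)*(exp(-(k*x))*(-k)) = 0"
      using ode2 that by (simp add: algebra_simps power2_eq_square)
    ultimately show ?thesis by simp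
  qed
  obtain c1 where c1: "\<forall>x\<in>{a..b}. (D1 x - k*M x)*exp(k*x) = c1"
    using has_field_derivative_zero_constant[OF convex_real_interval(5) e1] by blast
  obtain c2 where c2: "\<forall>x\<in>{a..b}. (D1 x + k*M x)*exp(-(k*x)) = c2"
    using has_field_derivative_zero_constant[OF convex_real_interval(5) e2] by blast
  show ?thesis
  proof
    fix x assume x: "x \<in> {a..b}"
    have h1: "D1 x - k*M x = D1 x0 * exp (-(k*(x-x0)))"
    proof -
      have "(D1 x - k*M x)*exp(k*x) = D1 x0 * exp(k*x0)" using c1 x x0 bspec[OF c1 x0(1)] by auto
      hence "D1 x - k*M x = D1 x0 * exp(k*x0) * exp(-(k*x))"
        by (metis exp_minus_inverse mult.assoc mult.right_neutral)
      thus ?thesis by (simp add: mult.assoc exp_add[symmetric] algebra_simps)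
    qed
    have h2: "D1 x + k*M x = D1 x0 * exp (k*(x-x0))"
    proof -
      have "(D1 x + k*M x)*exp(-(k*x)) = D1 x0 * exp(-(k*x0))" using c2 x x0 bspec[OF c2 x0(1)] by auto
      hence "D1 x + k*M x = D1 x0 * exp(-(k*x0)) * exp(k*x)"
        by (metis exp_minus_inverse mult.assoc mult.commute mult.right_neutral)
      thus ?thesis by (simp add: mult.assoc exp_add[symmetric] algebra_simps)
    qed
    show "k * M x = D1 x0 * sinh (k*(x-x0)) \<and> D1 x = D1 x0 * cosh (k*(x-x0))"
      using h1 h2 unfolding sinh_exp_real cosh_exp_real by (auto simp: field_simps)
  qed
qed

lemma ode_lin:
  fixes M D1 D2 :: "real \<Rightarrow> real" and a b x0 :: real
  assumes ab: "a < b" and C: "C2_on a b M D1 D2" and ode: "\<forall>x\<in>{a<..<b}. D2 x = 0"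
    and x0: "x0 \<in> {a..b}"
  shows "\<forall>x\<in>{a..b}. D1 x = D1 x0 \<and> M x = M x0 + D1 x0 * (x - x0)"
proof -
  note F = C2_facts[OF ab C]
  have ode2: "\<forall>x\<in>{a..b}. D2 x = 0"
    using eq_closed[OF ab F(3), of "\<lambda>x. 0"] ode by auto
  have e1: "(D1 has_real_derivative 0) (at x within {a..b})" if "x \<in> {a..b}" for x
    using F(2) ode2 that by metis
  obtain c1 where c1: "\<forall>x\<in>{a..b}. D1 x = c1"
    using has_field_derivative_zero_constant[OF convex_real_interval(5) e1] by blast
  have e2: "((\<lambda>x. M x - D1 x0 * x) has_real_derivative 0) (at x within {a..b})"
    if "x \<in> {a..b}" for x
  proof -
    have "((\<lambda>x. M x - D1 x0 * x) has_real_derivative (D1 x - D1 x0 * 1)) (at x within {a..b})"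
      using F(1) that by (intro derivative_intros) auto
    thus ?thesis using c1 that x0 by simp
  qed
  obtain c2 where c2: "\<forall>x\<in>{a..b}. M x - D1 x0 * x = c2"
    using has_field_derivative_zero_constant[OF convex_real_interval(5) e2] by blast
  show ?thesis
  proof
    fix x assume x: "x \<in> {a..b}"
    have "M x - D1 x0 * x = M x0 - D1 x0 * x0" using c2 x x0 by metis
    then show "D1 x = D1 x0 \<and> M x = M x0 + D1 x0 * (x - x0)"
      using c1 x x0 by (auto simp: algebra_simps)
  qed
qed

lemma coth_gt1: "t > 0 \<Longrightarrow> coth t > 1"
  unfolding coth_def using sinh_less_cosh_real[of t] by (simp add: field_simps)

lemma coth_mono: assumes "0 < s" "s < t" shows "coth t < coth s"
proof -
  have "sinh (t - s) > 0" using assms by simp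
  hence "cosh t * sinh s < cosh s * sinh t" unfolding sinh_diff by (simp add: algebra_simps)
  moreover have "sinh s > 0" "sinh t > 0" using assms by auto
  ultimately show ?thesis unfolding coth_def by (simp add: field_simps)
qed

lemma coth_le2: assumes "t \<ge> 1" shows "coth t \<le> 2"
proof -
  have st: "sinh t > 0" using assms by simp
  have "1 + 2*t \<le> exp (2*t)" by (rule exp_ge_add_one_self)
  hence "3 \<le> exp (2*t)" using assms by linarith
  hence "3 * exp (-t) \<le> exp (2*t) * exp (-t)" by (simp add: mult_right_mono)
  also have "exp (2*t) * exp (-t) = exp t" by (simp add: exp_add[symmetric])
  finally have "3 * exp (-t) \<le> exp t" .
  hence "cosh t \<le> 2 * sinh t" unfolding cosh_def sinh_def by (simp add: field_simps)
  thus ?thesis unfolding coth_def using st by (simp add: field_simps)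
qed

definition phi :: "real \<Rightarrow> real \<Rightarrow> real" where "phi c l = l^2 * coth (c / l)"

lemma phi_pos: "c > 0 \<Longrightarrow> l > 0 \<Longrightarrow> phi c l > l^2"
  unfolding phi_def using coth_gt1[of "c/l"] by simp

lemma phi_mono: assumes "c > 0" "0 < l1" "l1 < l2" shows "phi c l1 < phi c l2"
proof -
  have "c / l2 < c / l1" using assms by (simp add: frac_less2)
  hence h: "coth (c/l1) < coth (c/l2)" using coth_mono assms by simp
  have "l1^2 < l2^2" using assms by (simp add: power_strict_mono)
  moreover have "coth (c/l1) > 0" using coth_gt1[of "c/l1"] assms by simp
  ultimately show ?thesis unfolding phi_def using h
    by (meson assms mult_strict_mono' less_imp_le zero_le_power2)
qed

lemma phi_cont: assumes "c > 0" "0 < a" shows "continuous_on {a..b} (phi c)"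
  unfolding phi_def coth_def using assms
  by (auto intro!: continuous_intros)

lemma phi_exists: assumes "c > 0" "K > 0" shows "\<exists>l>0. phi c l = K"
proof -
  define l1 where "l1 = min c (sqrt K / 2)"
  define l2 where "l2 = sqrt K + c + 1"
  have l1p: "l1 > 0" using assms by (simp add: l1_def)
  have "c / l1 \<ge> 1" using l1p by (simp add: l1_def)
  hence "coth (c/l1) \<le> 2" by (rule coth_le2)
  hence "phi c l1 \<le> l1^2 * 2" unfolding phi_def by (simp add: mult_left_mono)
  also have "l1^2 \<le> (sqrt K / 2)^2" using l1p by (simp add: l1_def power_mono)
  hence "l1^2 * 2 \<le> K / 2" using assms by (simp add: power_divide)
  finally have a1: "phi c l1 \<le> K" using assms by linarith
  have "K \<le> l2^2"
  proof -
    have "sqrt K \<le> l2" using assms by (simp add: l2_def)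
    hence "(sqrt K)^2 \<le> l2^2" by (rule power_mono) (use assms in simp)
    thus ?thesis using assms by simp
  qed
  also have "l2^2 < phi c l2" proof (rule phi_pos) show "0 < l2" unfolding l2_def using assms real_sqrt_gt_zero[of K] by linarith qed (use assms in auto)
  finally have a2: "K \<le> phi c l2" by simp
  have "l1 \<le> c" by (simp add: l1_def)
  moreover have "sqrt K > 0" using assms by simp
  ultimately have "l1 \<le> l2" unfolding l2_def by linarith
  from IVT'[OF a1 a2 this phi_cont[OF assms(1) l1p]] obtain x where "x \<ge> l1" "phi c x = K" by auto
  thus ?thesis using l1p by (intro exI[of _ x]) auto
qed

lemma solP_shape:
  fixes n :: nat
  assumes p: "p0 < p1" "p1 < 0" and G: "Gam > 0" and L: "lam > 0" and n: "n \<ge> 1"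
    and S: "solP g rj Gam lam p0 p1 n M"
  shows "\<exists>A B. (\<forall>p\<in>{p1..0}. M p = A * sinh (real n * p / Gam)) \<and>
     (\<forall>p\<in>{p0..p1}. M p = B * sinh (real n * (p - p0) / lam)) \<and>
     real n * Gam^2 * A * cosh (real n * p1 / Gam) - real n * lam^2 * B * cosh (real n * (p1 - p0) / lam)
       = g * rj * M p1"
proof -
  from S obtain L1 L2 R1 R2 where C1: "C2_on p0 p1 M L1 L2" and C2: "C2_on p1 0 M R1 R2"
    and o1: "\<forall>p\<in>{p0<..<p1}. (a_lam Gam lam p1 p)^2 * L2 p = (real n)^2 * M p"
    and o2: "\<forall>p\<in>{p1<..<0}. (a_lam Gam lam p1 p)^2 * R2 p = (real n)^2 * M p"
    and J: "Gam^3 * R1 p1 - lam^3 * L1 p1 = g * rj * M p1"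
    and b: "M p0 = 0" "M 0 = 0"
    unfolding solP_def by blast
  have o1': "\<forall>p\<in>{p0<..<p1}. L2 p = (real n / lam)^2 * M p"
  proof
    fix p assume pp: "p \<in> {p0<..<p1}"
    hence e: "(real n)^2 * M p = lam^2 * L2 p" using o1 by (simp add: a_lam_def)
    have "(real n / lam)^2 * M p = (real n)^2 * M p / lam^2" by (simp add: power_divide)
    also have "\<dots> = L2 p" unfolding e using L by simp
    finally show "L2 p = (real n / lam)^2 * M p" by simp
  qed
  have o2': "\<forall>p\<in>{p1<..<0}. R2 p = (real n / Gam)^2 * M p"
  proof
    fix p assume pp: "p \<in> {p1<..<0}"
    hence e: "(real n)^2 * M p = Gam^2 * R2 p" using o2 by (simp add: a_lam_def)
    have "(real n / Gam)^2 * M p = (real n)^2 * M p / Gam^2" by (simp add: power_divide)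
    also have "\<dots> = R2 p" unfolding e using G by simp
    finally show "R2 p = (real n / Gam)^2 * M p" by simp
  qed
  note E1 = ode_exp[OF p(1) C1 o1', of p0] 
  note E2 = ode_exp[OF p(2) C2 o2', of 0]
  define A where "A = R1 0 / (real n / Gam)"
  define B where "B = L1 p0 / (real n / lam)"
  have nz: "real n / Gam \<noteq> 0" "real n / lam \<noteq> 0" using n G L by auto
  have hA: "\<forall>p\<in>{p1..0}. M p = A * sinh (real n * p / Gam)"
  proof
    fix p assume "p \<in> {p1..0}"
    hence e: "real n / Gam * M p = R1 0 * sinh (real n / Gam * (p - 0))"
      using conjunct1[OF bspec[OF E2[OF _ b(2)], of p]] p by simp
    have "M p = (real n / Gam * M p) / (real n / Gam)" using nz by simp
    also have "\<dots> = A * sinh (real n / Gam * (p - 0))" unfolding e A_def by simp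
    finally show "M p = A * sinh (real n * p / Gam)" by simp
  qed
  have hB: "\<forall>p\<in>{p0..p1}. M p = B * sinh (real n * (p - p0) / lam)"
  proof
    fix p assume "p \<in> {p0..p1}"
    hence e: "real n / lam * M p = L1 p0 * sinh (real n / lam * (p - p0))"
      using conjunct1[OF bspec[OF E1[OF _ b(1)], of p]] p by simp
    have "M p = (real n / lam * M p) / (real n / lam)" using nz by simp
    also have "\<dots> = B * sinh (real n / lam * (p - p0))" unfolding e B_def by simp
    finally show "M p = B * sinh (real n * (p - p0) / lam)" by simp
  qed
  have r1: "R1 p1 = R1 0 * cosh (real n / Gam * (p1 - 0))"
    using conjunct2[OF bspec[OF E2[OF _ b(2)], of p1]] p by simp
  have l1: "L1 p1 = L1 p0 * cosh (real n / lam * (p1 - p0))"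
    using conjunct2[OF bspec[OF E1[OF _ b(1)], of p1]] p by simp
  have "real n * Gam^2 * A * cosh (real n * p1 / Gam) - real n * lam^2 * B * cosh (real n * (p1 - p0) / lam)
      = Gam^3 * R1 p1 - lam^3 * L1 p1"
  proof -
    have a: "real n * Gam^2 * A = Gam^3 * R1 0" unfolding A_def using G n
      by (simp add: power2_eq_square power3_eq_cube)
    have b: "real n * lam^2 * B = lam^3 * L1 p0" unfolding B_def using L n
      by (simp add: power2_eq_square power3_eq_cube)
    have c: "real n / Gam * (p1 - 0) = real n * p1 / Gam" "real n / lam * (p1 - p0) = real n * (p1 - p0) / lam"
      by simp_all
    show ?thesis unfolding r1 l1 a b c by simp
  qed
  with J hA hB show ?thesis by metis
qed

lemma C2_cont_join:
  assumes "a < b" "b < c" "C2_on a b M D1 D2" "C2_on b c M E1 E2"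
  shows "continuous_on {a..c} M"
proof -
  have "{a..c} = {a..b} \<union> {b..c}" using assms by auto
  thus ?thesis using continuous_on_closed_Un[OF closed_atLeastAtMost closed_atLeastAtMost
      C2_facts(4)[OF assms(1,3)] C2_facts(4)[OF assms(2,4)]] by simp
qed

lemma C2_on_transfer:
  assumes "a < b" "\<And>x. x \<in> {a..b} \<Longrightarrow> M x = f x"
    "\<And>x. (f has_real_derivative D1 x) (at x)" "\<And>x. (D1 has_real_derivative D2 x) (at x)"
    "continuous_on {a..b} D2"
  shows "C2_on a b M D1 D2"
  unfolding C2_on_def
proof (intro conjI ballI assms(5))
  fix x assume x: "x \<in> {a..b}"
  show "(M has_real_derivative D1 x) (at x within {a..b})"
    by (rule has_field_derivative_transform_within[OF has_field_derivative_at_within[OF assms(3)] zero_less_one x])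
       (use assms(2) in auto)
  show "(D1 has_real_derivative D2 x) (at x within {a..b})"
    by (rule has_field_derivative_at_within[OF assms(4)])
qed

lemma Mstar_sol:
  fixes n :: nat
  assumes p: "p0 < p1" "p1 < 0" and G: "Gam > 0" and L: "lam > 0" and n: "n \<ge> 1"
    and D: "disp g rj Gam p0 p1 n lam"
  shows "solP g rj Gam lam p0 p1 n (Mstar Gam p0 p1 n lam)"
proof -
  define s1 where "s1 = sinh (real n * p1 / Gam)"
  define s2 where "s2 = sinh (real n * (p1 - p0) / lam)"
  define mu where "mu = s1 / s2"
  define M where "M = Mstar Gam p0 p1 n lam"
  have s1n: "s1 < 0" unfolding s1_def using p G n by (simp add: divide_neg_pos mult_pos_neg)
  have s2p: "s2 > 0" unfolding s2_def using p L n by simp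
  have HML: "M x = mu * sinh (real n * (x - p0) / lam)" if "x \<in> {p0..p1}" for x
  proof (cases "x = p1")
    case True thus ?thesis using s2p p L unfolding M_def Mstar_def mu_def s1_def s2_def by (simp add: Let_def)
  next
    case False thus ?thesis using that unfolding M_def Mstar_def mu_def s1_def s2_def by (simp add: Let_def)
  qed
  have HMR: "M x = sinh (real n * x / Gam)" if "x \<in> {p1..0}" for x
    using that unfolding M_def Mstar_def by (simp add: Let_def)
  define L1 where "L1 = (\<lambda>x. mu * (cosh (real n * (x - p0) / lam) * (real n / lam)))"
  define L2 where "L2 = (\<lambda>x. mu * (sinh (real n * (x - p0) / lam) * (real n / lam)^2))"
  define R1 where "R1 = (\<lambda>x. cosh (real n * x / Gam) * (real n / Gam))"
  define R2 where "R2 = (\<lambda>x. sinh (real n * x / Gam) * (real n / Gam)^2)"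
  have CL: "C2_on p0 p1 M L1 L2"
  proof (rule C2_on_transfer[OF p(1) HML])
    fix x
    show "((\<lambda>x. mu * sinh (real n * (x - p0) / lam)) has_real_derivative L1 x) (at x)"
      unfolding L1_def using L by (auto intro!: derivative_eq_intros)
    show "(L1 has_real_derivative L2 x) (at x)"
      unfolding L1_def L2_def using L by (auto intro!: derivative_eq_intros simp: power2_eq_square)
    show "continuous_on {p0..p1} L2" unfolding L2_def using L by (auto intro!: continuous_intros)
  qed
  have CR: "C2_on p1 0 M R1 R2"
  proof (rule C2_on_transfer[OF p(2) HMR])
    fix x
    show "((\<lambda>x. sinh (real n * x / Gam)) has_real_derivative R1 x) (at x)"
      unfolding R1_def using G by (auto intro!: derivative_eq_intros)
    show "(R1 has_real_derivative R2 x) (at x)"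
      unfolding R1_def R2_def using G by (auto intro!: derivative_eq_intros simp: power2_eq_square)
    show "continuous_on {p1..0} R2" unfolding R2_def using G by (auto intro!: continuous_intros)
  qed
  have o1: "\<forall>p\<in>{p0<..<p1}. (a_lam Gam lam p1 p)^2 * L2 p = (real n)^2 * M p"
    using HML L unfolding L2_def by (auto simp: a_lam_def power2_eq_square)
  have o2: "\<forall>p\<in>{p1<..<0}. (a_lam Gam lam p1 p)^2 * R2 p = (real n)^2 * M p"
    using HMR G unfolding R2_def by (auto simp: a_lam_def power2_eq_square)
  have Mp1: "M p1 = s1" using HMR p unfolding s1_def by auto
  have Dk: "g * rj = real n * Gam^2 * (cosh (real n * p1 / Gam) / s1) - real n * lam^2 * (cosh (real n * (p1 - p0) / lam) / s2)"
    using D n unfolding disp_def coth_def s1_def[symmetric] s2_def[symmetric] by (simp add: field_simps)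
  have J: "Gam^3 * R1 p1 - lam^3 * L1 p1 = g * rj * M p1"
  proof -
    have "Gam^3 * R1 p1 = real n * Gam^2 * cosh (real n * p1 / Gam)"
      unfolding R1_def using G by (simp add: power2_eq_square power3_eq_cube)
    moreover have "lam^3 * L1 p1 = real n * lam^2 * (cosh (real n * (p1 - p0) / lam) / s2) * s1"
      unfolding L1_def mu_def using L by (simp add: power2_eq_square power3_eq_cube)
    moreover have "g * rj * M p1 = real n * Gam^2 * cosh (real n * p1 / Gam) - real n * lam^2 * (cosh (real n * (p1 - p0) / lam) / s2) * s1"
      unfolding Mp1 Dk using s1n by (simp add: algebra_simps)
    ultimately show ?thesis by simp
  qed
  have "M p0 = 0" using HML p by auto
  moreover have "M 0 = 0" using HMR p by auto
  moreover have "continuous_on {p0..0} M" by (rule C2_cont_join[OF p CL CR])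
  ultimately show ?thesis unfolding solP_def M_def[symmetric] using CL CR o1 o2 J by blast
qed

lemma P0_iff:
  assumes p: "p0 < p1" "p1 < 0" and G: "Gam > 0" and L: "lam > 0"
  shows "(\<exists>M. solP0 g rj Gam lam p0 p1 M \<and> (\<exists>p\<in>{p0..0}. M p \<noteq> 0))
          \<longleftrightarrow> lam^3 = - g * rj * (p1 - p0)"
proof
  assume "\<exists>M. solP0 g rj Gam lam p0 p1 M \<and> (\<exists>p\<in>{p0..0}. M p \<noteq> 0)"
  then obtain M q where S: "solP0 g rj Gam lam p0 p1 M" and q: "q \<in> {p0..0}" "M q \<noteq> 0" by blast
  from S obtain L1 L2 R1 R2 where C1: "C2_on p0 p1 M L1 L2" and C2: "C2_on p1 0 M R1 R2"
    and o1: "\<forall>p\<in>{p0<..<p1}. (a_lam Gam lam p1 p)^2 * L2 p = 0"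
    and o2: "\<forall>p\<in>{p1<..<0}. (a_lam Gam lam p1 p)^2 * R2 p = 0"
    and J: "Gam^3 * R1 p1 - lam^3 * L1 p1 = g * rj * M p1"
    and b: "M p0 = 0" "M 0 = M p1"
    unfolding solP0_def by blast
  have o1': "\<forall>p\<in>{p0<..<p1}. L2 p = 0" using o1 L by (auto simp: a_lam_def)
  have o2': "\<forall>p\<in>{p1<..<0}. R2 p = 0" using o2 G by (auto simp: a_lam_def)
  note E1 = ode_lin[OF p(1) C1 o1', of p0]
  note E2 = ode_lin[OF p(2) C2 o2', of p1]
  have p0i: "p0 \<in> {p0..p1}" and p1i: "p1 \<in> {p0..p1}" "p1 \<in> {p1..0}" and zi: "0 \<in> {p1..0}"
    using p by auto
  have lin1: "M x = L1 p0 * (x - p0)" if x: "x \<in> {p0..p1}" for x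
  proof -
    have "M x = M p0 + L1 p0 * (x - p0)" using conjunct2[OF bspec[OF E1[OF p0i] x]] .
    thus ?thesis unfolding b(1) by simp
  qed
  have l1: "L1 p1 = L1 p0" using conjunct1[OF bspec[OF E1[OF p0i] p1i(1)]] .
  have "M 0 = M p1 + R1 p1 * (0 - p1)" using conjunct2[OF bspec[OF E2[OF p1i(2)] zi]] .
  hence r0: "R1 p1 = 0" using b(2) p by simp
  have lin2: "M x = M p1" if x: "x \<in> {p1..0}" for x
  proof -
    have "M x = M p1 + R1 p1 * (x - p1)" using conjunct2[OF bspec[OF E2[OF p1i(2)] x]] .
    thus ?thesis unfolding r0 by simp
  qed
  have Mp1: "M p1 = L1 p0 * (p1 - p0)" using lin1[OF p1i(1)] .
  have nz: "L1 p0 \<noteq> 0"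
  proof
    assume z: "L1 p0 = 0"
    have "M q = 0"
    proof (cases "q \<le> p1")
      case True thus ?thesis using lin1[of q] q z by simp
    next
      case False thus ?thesis using lin2[of q] q z Mp1 by simp
    qed
    thus False using q by simp
  qed
  have "(0 - lam^3) * L1 p0 = g * rj * (p1 - p0) * L1 p0" using J unfolding r0 l1 Mp1 by (simp add: algebra_simps)
  hence "0 - lam^3 = g * rj * (p1 - p0)" using nz by (metis mult_right_cancel)
  thus "lam^3 = - g * rj * (p1 - p0)" by simp
next
  assume h: "lam^3 = - g * rj * (p1 - p0)"
  define M where "M = (\<lambda>x::real. min x p1 - p0)"
  have C1: "C2_on p0 p1 M (\<lambda>_. 1) (\<lambda>_. 0)"
    by (rule C2_on_transfer[OF p(1), of _ "\<lambda>x. x - p0"])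
       (auto simp: M_def intro!: derivative_eq_intros)
  have C2: "C2_on p1 0 M (\<lambda>_. 0) (\<lambda>_. 0)"
    by (rule C2_on_transfer[OF p(2), of _ "\<lambda>x. p1 - p0"])
       (auto simp: M_def intro!: derivative_eq_intros)
  have "solP0 g rj Gam lam p0 p1 M"
    unfolding solP0_def
  proof (intro conjI exI)
    show "continuous_on {p0..0} M" unfolding M_def by (auto intro!: continuous_intros)
    show "Gam ^ 3 * 0 - lam ^ 3 * 1 = g * rj * M p1" using h by (simp add: M_def)
  qed (use C1 C2 p in \<open>auto simp: M_def\<close>)
  moreover have "M p1 \<noteq> 0" "p1 \<in> {p0..0}" using p by (auto simp: M_def)
  ultimately show "\<exists>M. solP0 g rj Gam lam p0 p1 M \<and> (\<exists>p\<in>{p0..0}. M p \<noteq> 0)" by blast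
qed

theorem lemma3p3:
  fixes g rj Gam lam p0 p1 :: real
  assumes "g > 0" and "p0 < p1" and "p1 < 0" and "rj < 0" and "Gam > 0" and "lam > 0"
  shows
   "(\<forall>n::nat. n \<ge> 1 \<longrightarrow>
      ((\<exists>M. solP g rj Gam lam p0 p1 n M \<and> (\<exists>p\<in>{p0..0}. M p \<noteq> 0))
          \<longleftrightarrow> disp g rj Gam p0 p1 n lam)
      \<and> ((\<exists>ls>0. disp g rj Gam p0 p1 n ls)
          \<longleftrightarrow> g * rj / real n - Gam^2 * coth (real n * p1 / Gam) < 0)
      \<and> (\<forall>l1 l2. l1 > 0 \<longrightarrow> l2 > 0 \<longrightarrow> disp g rj Gam p0 p1 n l1 \<longrightarrow>
            disp g rj Gam p0 p1 n l2 \<longrightarrow> l1 = l2)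
      \<and> (disp g rj Gam p0 p1 n lam \<longrightarrow>
            solP g rj Gam lam p0 p1 n (Mstar Gam p0 p1 n lam)
            \<and> (\<exists>p\<in>{p0..0}. Mstar Gam p0 p1 n lam p \<noteq> 0)
            \<and> (\<forall>M. solP g rj Gam lam p0 p1 n M \<longrightarrow>
                  (\<exists>c. \<forall>p\<in>{p0..0}. M p = c * Mstar Gam p0 p1 n lam p))))
    \<and> ((\<exists>M. solP0 g rj Gam lam p0 p1 M \<and> (\<exists>p\<in>{p0..0}. M p \<noteq> 0))
          \<longleftrightarrow> lam^3 = - g * rj * (p1 - p0))"
proof
  note p = assms(2,3) and G = assms(5) and L = assms(6)
  show "(\<exists>M. solP0 g rj Gam lam p0 p1 M \<and> (\<exists>p\<in>{p0..0}. M p \<noteq> 0))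
          \<longleftrightarrow> lam^3 = - g * rj * (p1 - p0)" by (rule P0_iff[OF p G L])
  show "\<forall>n::nat. n \<ge> 1 \<longrightarrow>
      ((\<exists>M. solP g rj Gam lam p0 p1 n M \<and> (\<exists>p\<in>{p0..0}. M p \<noteq> 0))
          \<longleftrightarrow> disp g rj Gam p0 p1 n lam)
      \<and> ((\<exists>ls>0. disp g rj Gam p0 p1 n ls)
          \<longleftrightarrow> g * rj / real n - Gam^2 * coth (real n * p1 / Gam) < 0)
      \<and> (\<forall>l1 l2. l1 > 0 \<longrightarrow> l2 > 0 \<longrightarrow> disp g rj Gam p0 p1 n l1 \<longrightarrow>
            disp g rj Gam p0 p1 n l2 \<longrightarrow> l1 = l2)
      \<and> (disp g rj Gam p0 p1 n lam \<longrightarrow>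
            solP g rj Gam lam p0 p1 n (Mstar Gam p0 p1 n lam)
            \<and> (\<exists>p\<in>{p0..0}. Mstar Gam p0 p1 n lam p \<noteq> 0)
            \<and> (\<forall>M. solP g rj Gam lam p0 p1 n M \<longrightarrow>
                  (\<exists>c. \<forall>p\<in>{p0..0}. M p = c * Mstar Gam p0 p1 n lam p)))"
  proof (intro allI impI)
    fix n :: nat assume n: "n \<ge> 1"
    define c where "c = real n * (p1 - p0)"
    define K where "K = Gam^2 * coth (real n * p1 / Gam) - g * rj / real n"
    have cpos: "c > 0" using n p by (simp add: c_def)
    have dphi: "disp g rj Gam p0 p1 n ls \<longleftrightarrow> phi c ls = K" for ls
      unfolding disp_def phi_def c_def K_def by (rule iffI; linarith)
    define s1 where "s1 = sinh (real n * p1 / Gam)"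
    define s2 where "s2 = sinh (real n * (p1 - p0) / lam)"
    define c1 where "c1 = cosh (real n * p1 / Gam)"
    define c2 where "c2 = cosh (real n * (p1 - p0) / lam)"
    have s1n: "s1 < 0" unfolding s1_def using p G n by (simp add: divide_neg_pos mult_pos_neg)
    have s2p: "s2 > 0" unfolding s2_def using p L n by simp
    have P2: "(\<exists>ls>0. disp g rj Gam p0 p1 n ls)
          \<longleftrightarrow> g * rj / real n - Gam^2 * coth (real n * p1 / Gam) < 0"
    proof
      assume "\<exists>ls>0. disp g rj Gam p0 p1 n ls"
      then obtain ls where "ls > 0" "phi c ls = K" using dphi by blast
      hence "K > 0" using phi_pos[OF cpos, of ls] by (smt (verit) zero_less_power2)
      thus "g * rj / real n - Gam^2 * coth (real n * p1 / Gam) < 0" unfolding K_def by linarith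
    next
      assume "g * rj / real n - Gam^2 * coth (real n * p1 / Gam) < 0"
      hence "K > 0" unfolding K_def by linarith
      thus "\<exists>ls>0. disp g rj Gam p0 p1 n ls" using phi_exists[OF cpos] dphi by blast
    qed
    have P3: "\<forall>l1 l2. l1 > 0 \<longrightarrow> l2 > 0 \<longrightarrow> disp g rj Gam p0 p1 n l1 \<longrightarrow>
            disp g rj Gam p0 p1 n l2 \<longrightarrow> l1 = l2"
    proof (intro allI impI)
      fix l1 l2 :: real assume h: "l1 > 0" "l2 > 0" "disp g rj Gam p0 p1 n l1" "disp g rj Gam p0 p1 n l2"
      hence e: "phi c l1 = phi c l2" using dphi by simp
      show "l1 = l2"
      proof (rule ccontr)
        assume "l1 \<noteq> l2"
        hence "l1 < l2 \<or> l2 < l1" by linarith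
        thus False using phi_mono[OF cpos h(1), of l2] phi_mono[OF cpos h(2), of l1] e by auto
      qed
    qed
    have nzM: "Mstar Gam p0 p1 n lam p1 \<noteq> 0"
      using s1n p n G unfolding Mstar_def s1_def by (simp add: Let_def)
    have p1i: "p1 \<in> {p0..0}" using p by simp
    have uniq: "\<exists>c. \<forall>p\<in>{p0..0}. M p = c * Mstar Gam p0 p1 n lam p"
      if S: "solP g rj Gam lam p0 p1 n M" for M
    proof -
      obtain A B where hA: "\<forall>p\<in>{p1..0}. M p = A * sinh (real n * p / Gam)"
        and hB: "\<forall>p\<in>{p0..p1}. M p = B * sinh (real n * (p - p0) / lam)"
        using solP_shape[OF p G L n S] by blast
      have "A * s1 = B * s2" using bspec[OF hA, of p1] bspec[OF hB, of p1] p
        unfolding s1_def s2_def by simp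
      hence Bv: "B = A * (s1 / s2)" using s2p by (simp add: field_simps)
      show ?thesis
      proof (intro exI ballI)
        fix q assume q: "q \<in> {p0..0}"
        show "M q = A * Mstar Gam p0 p1 n lam q"
        proof (cases "p1 \<le> q")
          case True thus ?thesis using bspec[OF hA, of q] q unfolding Mstar_def by (simp add: Let_def)
        next
          case False thus ?thesis using bspec[OF hB, of q] q unfolding Mstar_def Bv s1_def s2_def
            by (simp add: Let_def)
        qed
      qed
    qed
    have P4: "disp g rj Gam p0 p1 n lam \<longrightarrow>
            solP g rj Gam lam p0 p1 n (Mstar Gam p0 p1 n lam)
            \<and> (\<exists>p\<in>{p0..0}. Mstar Gam p0 p1 n lam p \<noteq> 0)
            \<and> (\<forall>M. solP g rj Gam lam p0 p1 n M \<longrightarrow>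
                  (\<exists>c. \<forall>p\<in>{p0..0}. M p = c * Mstar Gam p0 p1 n lam p))"
      using Mstar_sol[OF p G L n] nzM p1i uniq by blast
    have P1: "(\<exists>M. solP g rj Gam lam p0 p1 n M \<and> (\<exists>p\<in>{p0..0}. M p \<noteq> 0))
          \<longleftrightarrow> disp g rj Gam p0 p1 n lam"
    proof
      assume "\<exists>M. solP g rj Gam lam p0 p1 n M \<and> (\<exists>p\<in>{p0..0}. M p \<noteq> 0)"
      then obtain M q where S: "solP g rj Gam lam p0 p1 n M" and q: "q \<in> {p0..0}" "M q \<noteq> 0" by blast
      obtain A B where hA: "\<forall>p\<in>{p1..0}. M p = A * sinh (real n * p / Gam)"
        and hB: "\<forall>p\<in>{p0..p1}. M p = B * sinh (real n * (p - p0) / lam)"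
        and J: "real n * Gam^2 * A * cosh (real n * p1 / Gam) - real n * lam^2 * B * cosh (real n * (p1 - p0) / lam)
          = g * rj * M p1"
        using solP_shape[OF p G L n S] by blast
      have Mp1: "M p1 = A * s1" using bspec[OF hA, of p1] p unfolding s1_def by simp
      have "A * s1 = B * s2" using bspec[OF hA, of p1] bspec[OF hB, of p1] p
        unfolding s1_def s2_def by simp
      hence Bv: "B = A * (s1 / s2)" using s2p by (simp add: field_simps)
      have Anz: "A \<noteq> 0"
      proof
        assume A0: "A = 0"
        hence B0: "B = 0" using Bv by simp
        have "M q = 0"
        proof (cases "p1 \<le> q")
          case True thus ?thesis using bspec[OF hA, of q] q A0 by simp
        next
          case False thus ?thesis using bspec[OF hB, of q] q B0 by simp
        qed
        thus False using q by simp
      qed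
      have nn: "real n \<noteq> 0" using n by simp
      have J2: "real n * Gam^2 * A * c1 - real n * lam^2 * (A * (s1 / s2)) * c2 = g * rj * (A * s1)"
        using J unfolding Mp1 Bv c1_def c2_def .
      have "(A * (real n * s1)) * (Gam^2 * (c1 / s1) - lam^2 * (c2 / s2)) = (A * (real n * s1)) * (g * rj / real n)"
      proof -
        have "(A * (real n * s1)) * (Gam^2 * (c1 / s1) - lam^2 * (c2 / s2))
            = real n * Gam^2 * A * c1 - real n * lam^2 * (A * (s1 / s2)) * c2"
          using s1n by (simp add: algebra_simps)
        also have "\<dots> = g * rj * (A * s1)" by (rule J2)
        also have "\<dots> = (A * (real n * s1)) * (g * rj / real n)" using nn by simp
        finally show ?thesis .
      qed
      moreover have "A * (real n * s1) \<noteq> 0" using Anz nn s1n by simp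
      ultimately have "Gam^2 * (c1 / s1) - lam^2 * (c2 / s2) = g * rj / real n"
        using mult_left_cancel by blast
      thus "disp g rj Gam p0 p1 n lam"
        unfolding disp_def coth_def s1_def[symmetric] s2_def[symmetric] c1_def[symmetric] c2_def[symmetric]
        by simp
    next
      assume "disp g rj Gam p0 p1 n lam"
      thus "\<exists>M. solP g rj Gam lam p0 p1 n M \<and> (\<exists>p\<in>{p0..0}. M p \<noteq> 0)"
        using Mstar_sol[OF p G L n] nzM p1i by blast
    qed
    show "((\<exists>M. solP g rj Gam lam p0 p1 n M \<and> (\<exists>p\<in>{p0..0}. M p \<noteq> 0))
          \<longleftrightarrow> disp g rj Gam p0 p1 n lam)
      \<and> ((\<exists>ls>0. disp g rj Gam p0 p1 n ls)
          \<longleftrightarrow> g * rj / real n - Gam^2 * coth (real n * p1 / Gam) < 0)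
      \<and> (\<forall>l1 l2. l1 > 0 \<longrightarrow> l2 > 0 \<longrightarrow> disp g rj Gam p0 p1 n l1 \<longrightarrow>
            disp g rj Gam p0 p1 n l2 \<longrightarrow> l1 = l2)
      \<and> (disp g rj Gam p0 p1 n lam \<longrightarrow>
            solP g rj Gam lam p0 p1 n (Mstar Gam p0 p1 n lam)
            \<and> (\<exists>p\<in>{p0..0}. Mstar Gam p0 p1 n lam p \<noteq> 0)
            \<and> (\<forall>M. solP g rj Gam lam p0 p1 n M \<longrightarrow>
                  (\<exists>c. \<forall>p\<in>{p0..0}. M p = c * Mstar Gam p0 p1 n lam p)))"
      using P1 P2 P3 P4 by blast
  qed
qed

end
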